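(* Let $G=(V,E)$ be an atomic bispanning graph with vertex-connectivity $2$ which is the $2$-clique sum of two simple bispanning graphs $G_1=(V_1,E_1)$ and $G_2=(V_2,E_2)$ at edges $d_1\in E_1$ and $d_2\in E_2$ (i.e. $G$ arises from the disjoint union of $G_1,G_2$ by identifying the ends of $d_1$ with those of $d_2$ and deleting $d_1,d_2$). Let $$V_\eta=\{((S_1,T_1),(S_2,T_2))\in V_{\tau(G_1)}\times V_{\tau(G_2)}:\text{not }((d_1\in S_1\text{ and }d_2\in S_2)\text{ or }(d_1\in T_1\text{ and }d_2\in T_2))\}.$$ Then there is a bijection $\varphi_v:V_{\tau(G)}\to V_\eta$.
   Context: Graphs are finite, undirected, may have parallel edges, no loops. A spanning tree of $H$ is an edge set $T$ with $(V(H),T)$ connected and acyclic; $H$ is bispanning if its edge set is the union of two disjoint spanning trees; a bispanning graph is atomic if its only bispanning subgraphs are itself and single vertices. Vertex-connectivity is the largest $k$ with $|V|>k$ such that deleting fewer than $k$ vertices leaves the graph connected. For a bispanning graph $H$, $V_{\tau(H)}$ is the set of ordered pairs $(S,T)$ of disjoint spanning trees of $H$ whose union is the edge set of $H$. *)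

theory Defs
  imports Main
begin

text \<open>Multigraphs: vertex set V, edge set E (edges carry identity, so parallel
edges are allowed), and an incidence map ends assigning to each edge its
two-element set of end vertices (no loops).\<close>

definition multigraph :: "'v set \<Rightarrow> 'e set \<Rightarrow> ('e \<Rightarrow> 'v set) \<Rightarrow> bool" where
  "multigraph V E ends \<longleftrightarrow> finite V \<and> finite E \<and>
     (\<forall>e\<in>E. ends e \<subseteq> V \<and> card (ends e) = 2)"

definition simple_graph :: "'v set \<Rightarrow> 'e set \<Rightarrow> ('e \<Rightarrow> 'v set) \<Rightarrow> bool" where
  "simple_graph V E ends \<longleftrightarrow> multigraph V E ends \<and> inj_on ends E"

definition adj :: "'e set \<Rightarrow> ('e \<Rightarrow> 'v set) \<Rightarrow> 'v \<Rightarrow> 'v \<Rightarrow> bool" where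
  "adj T ends x y \<longleftrightarrow> (\<exists>e\<in>T. ends e = {x, y})"

definition connected_on :: "'v set \<Rightarrow> 'e set \<Rightarrow> ('e \<Rightarrow> 'v set) \<Rightarrow> bool" where
  "connected_on V T ends \<longleftrightarrow> V \<noteq> {} \<and> (\<forall>u\<in>V. \<forall>v\<in>V. (adj T ends)\<^sup>*\<^sup>* u v)"

definition is_cycle :: "'e set \<Rightarrow> ('e \<Rightarrow> 'v set) \<Rightarrow> 'e list \<Rightarrow> 'v list \<Rightarrow> bool" where
  "is_cycle T ends es vs \<longleftrightarrow> length es = length vs \<and> length es \<ge> 1 \<and>
     distinct es \<and> distinct vs \<and> set es \<subseteq> T \<and>
     (\<forall>i<length es. ends (es ! i) = {vs ! i, vs ! ((i + 1) mod length vs)})"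

definition acyclic_on :: "'e set \<Rightarrow> ('e \<Rightarrow> 'v set) \<Rightarrow> bool" where
  "acyclic_on T ends \<longleftrightarrow> \<not> (\<exists>es vs. is_cycle T ends es vs)"

definition spanning_tree :: "'v set \<Rightarrow> 'e set \<Rightarrow> ('e \<Rightarrow> 'v set) \<Rightarrow> 'e set \<Rightarrow> bool" where
  "spanning_tree V E ends T \<longleftrightarrow> T \<subseteq> E \<and> connected_on V T ends \<and> acyclic_on T ends"

text \<open>V_tau(H): ordered pairs of disjoint spanning trees whose union is E.\<close>
definition tree_pairs :: "'v set \<Rightarrow> 'e set \<Rightarrow> ('e \<Rightarrow> 'v set) \<Rightarrow> ('e set \<times> 'e set) set" where
  "tree_pairs V E ends = {(S, T). spanning_tree V E ends S \<and> spanning_tree V E ends T \<and>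
      S \<inter> T = {} \<and> S \<union> T = E}"

definition bispanning :: "'v set \<Rightarrow> 'e set \<Rightarrow> ('e \<Rightarrow> 'v set) \<Rightarrow> bool" where
  "bispanning V E ends \<longleftrightarrow> multigraph V E ends \<and> tree_pairs V E ends \<noteq> {}"

definition subgraph :: "'v set \<Rightarrow> 'e set \<Rightarrow> 'v set \<Rightarrow> 'e set \<Rightarrow> ('e \<Rightarrow> 'v set) \<Rightarrow> bool" where
  "subgraph V' E' V E ends \<longleftrightarrow> V' \<subseteq> V \<and> E' \<subseteq> E \<and> (\<forall>e\<in>E'. ends e \<subseteq> V')"

definition atomic :: "'v set \<Rightarrow> 'e set \<Rightarrow> ('e \<Rightarrow> 'v set) \<Rightarrow> bool" where
  "atomic V E ends \<longleftrightarrow> bispanning V E ends \<and>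
     (\<forall>V' E'. subgraph V' E' V E ends \<and> bispanning V' E' ends \<longrightarrow>
        (V' = V \<and> E' = E) \<or> card V' = 1)"

definition k_connected :: "nat \<Rightarrow> 'v set \<Rightarrow> 'e set \<Rightarrow> ('e \<Rightarrow> 'v set) \<Rightarrow> bool" where
  "k_connected k V E ends \<longleftrightarrow> card V > k \<and>
     (\<forall>X. X \<subseteq> V \<and> card X < k \<longrightarrow> connected_on (V - X) {e\<in>E. ends e \<subseteq> V - X} ends)"

definition vertex_connectivity :: "'v set \<Rightarrow> 'e set \<Rightarrow> ('e \<Rightarrow> 'v set) \<Rightarrow> nat" where
  "vertex_connectivity V E ends = (GREATEST k. k_connected k V E ends)"

text \<open>(V,E,ends) is the 2-clique sum of (V1,E1,ends1) and (V2,E2,ends2) at d1, d2: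
the vertex sets are embedded injectively by f1, f2, overlapping exactly in the
(identified) ends of d1 and d2; the edges are those of E1, E2 except d1, d2
(the edge sets are disjoint), with incidences transported along f1, f2.\<close>
definition two_clique_sum ::
  "'v set \<Rightarrow> 'e set \<Rightarrow> ('e \<Rightarrow> 'v set) \<Rightarrow>
   'v1 set \<Rightarrow> 'e set \<Rightarrow> ('e \<Rightarrow> 'v1 set) \<Rightarrow> 'e \<Rightarrow>
   'v2 set \<Rightarrow> 'e set \<Rightarrow> ('e \<Rightarrow> 'v2 set) \<Rightarrow> 'e \<Rightarrow> bool" where
  "two_clique_sum V E ends V1 E1 ends1 d1 V2 E2 ends2 d2 \<longleftrightarrow>
     d1 \<in> E1 \<and> d2 \<in> E2 \<and> E1 \<inter> E2 = {} \<and> E = (E1 - {d1}) \<union> (E2 - {d2}) \<and>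
     (\<exists>f1 f2. inj_on f1 V1 \<and> inj_on f2 V2 \<and> V = f1 ` V1 \<union> f2 ` V2 \<and>
        f1 ` V1 \<inter> f2 ` V2 = f1 ` ends1 d1 \<and> f2 ` ends2 d2 = f1 ` ends1 d1 \<and>
        (\<forall>e\<in>E1 - {d1}. ends e = f1 ` ends1 e) \<and>
        (\<forall>e\<in>E2 - {d2}. ends e = f2 ` ends2 e))"

definition V_eta ::
  "'v1 set \<Rightarrow> 'e set \<Rightarrow> ('e \<Rightarrow> 'v1 set) \<Rightarrow> 'e \<Rightarrow>
   'v2 set \<Rightarrow> 'e set \<Rightarrow> ('e \<Rightarrow> 'v2 set) \<Rightarrow> 'e \<Rightarrow>
   (('e set \<times> 'e set) \<times> ('e set \<times> 'e set)) set" where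
  "V_eta V1 E1 ends1 d1 V2 E2 ends2 d2 =
     {((S1, T1), (S2, T2)). (S1, T1) \<in> tree_pairs V1 E1 ends1 \<and> (S2, T2) \<in> tree_pairs V2 E2 ends2 \<and>
        \<not> ((d1 \<in> S1 \<and> d2 \<in> S2) \<or> (d1 \<in> T1 \<and> d2 \<in> T2))}"

end

theory Submission
  imports Defs
begin

definition okE :: "'v set \<Rightarrow> 'e set \<Rightarrow> ('e \<Rightarrow> 'v set) \<Rightarrow> bool" where
 "okE V T ends \<longleftrightarrow> (\<forall>e\<in>T. ends e \<subseteq> V \<and> card (ends e) = 2)"

lemma okE_mono: "okE V T ends \<Longrightarrow> F \<subseteq> T \<Longrightarrow> okE V F ends"
  unfolding okE_def by blast

lemma adj_sym: "adj T ends x y \<Longrightarrow> adj T ends y x"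
  unfolding adj_def by (auto simp: insert_commute)

lemma rtr_sym: "(adj T ends)\<^sup>*\<^sup>* x y \<Longrightarrow> (adj T ends)\<^sup>*\<^sup>* y x"
  by (induction rule: rtranclp_induct) (auto intro: converse_rtranclp_into_rtranclp adj_sym)

lemma adj_mono: "adj T ends x y \<Longrightarrow> T \<subseteq> F \<Longrightarrow> adj F ends x y"
  unfolding adj_def by blast

lemma rtr_map:
  assumes "r\<^sup>*\<^sup>* x y" "P x" "\<And>u v. P u \<Longrightarrow> r u v \<Longrightarrow> P v \<and> s\<^sup>*\<^sup>* (g u) (g v)"
  shows "s\<^sup>*\<^sup>* (g x) (g y)"
proof -
  have "P y \<and> s\<^sup>*\<^sup>* (g x) (g y)" using assms(1)
  proof (induction rule: rtranclp_induct)
    case base thus ?case using assms(2) by simp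
  next
    case (step y z) thus ?case using assms(3)[of y z] by (meson rtranclp_trans)
  qed
  thus ?thesis by simp
qed

definition is_path :: "'e set \<Rightarrow> ('e \<Rightarrow> 'v set) \<Rightarrow> 'e list \<Rightarrow> 'v list \<Rightarrow> bool" where
 "is_path F ends es vs \<longleftrightarrow> length vs = Suc (length es) \<and> set es \<subseteq> F \<and>
    (\<forall>i<length es. ends (es!i) = {vs!i, vs!Suc i})"

lemma walk_path:
  assumes "(adj F ends)\<^sup>*\<^sup>* x y"
  shows "\<exists>es vs. is_path F ends es vs \<and> distinct vs \<and> hd vs = x \<and> last vs = y"
using assms
proof (induction rule: rtranclp_induct)
  case base
  show ?case by (rule exI[of _ "[]"], rule exI[of _ "[x]"]) (simp add: is_path_def)
next
  case (step y z)
  then obtain es vs where p: "is_path F ends es vs" "distinct vs" "hd vs = x" "last vs = y" by blast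
  from step(2) obtain g where g: "g \<in> F" "ends g = {y,z}" unfolding adj_def by blast
  have lv: "length vs = Suc (length es)" using p(1) by (simp add: is_path_def)
  show ?case
  proof (cases "z \<in> set vs")
    case True
    then obtain j where j: "j < length vs" "vs!j = z" by (auto simp: in_set_conv_nth)
    have jl: "j \<le> length es" using j(1) lv by simp
    have pe: "set es \<subseteq> F" "\<forall>i<length es. ends (es!i) = {vs!i, vs!Suc i}"
      using p(1) unfolding is_path_def by auto
    have "is_path F ends (take j es) (take (Suc j) vs)" unfolding is_path_def
    proof (intro conjI allI impI)
      show "length (take (Suc j) vs) = Suc (length (take j es))" using jl lv by simp
      show "set (take j es) \<subseteq> F" using pe(1) set_take_subset by fastforce
      fix i assume "i < length (take j es)"
      hence i: "i < j" "i < length es" using jl by auto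
      show "ends (take j es ! i) = {take (Suc j) vs ! i, take (Suc j) vs ! Suc i}"
        using pe(2) i by simp
    qed
    moreover have "distinct (take (Suc j) vs)" using p(2) by simp
    moreover have "hd (take (Suc j) vs) = x" using p(3) by simp
    moreover have "last (take (Suc j) vs) = z" using j
      by (simp add: take_Suc_conv_app_nth)
    ultimately show ?thesis by blast
  next
    case False
    have "is_path F ends (es@[g]) (vs@[z])" unfolding is_path_def
    proof (intro conjI allI impI)
      show "length (vs @ [z]) = Suc (length (es @ [g]))" using lv by simp
      show "set (es @ [g]) \<subseteq> F" using p(1) g(1) by (auto simp: is_path_def)
      fix i assume i: "i < length (es @ [g])"
      show "ends ((es @ [g]) ! i) = {(vs @ [z]) ! i, (vs @ [z]) ! Suc i}"
      proof (cases "i < length es")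
        case True thus ?thesis using p(1) lv by (simp add: nth_append is_path_def)
      next
        case False
        hence "i = length es" using i by simp
        moreover have "vs ! length es = y" using p(4) lv
          by (metis diff_Suc_1 last_conv_nth list.size(3) nat.simps(3))
        ultimately show ?thesis using g lv by (simp add: nth_append)
      qed
    qed
    moreover have "distinct (vs@[z])" using p(2) False by simp
    moreover have "hd (vs@[z]) = x" using p(3) lv by (cases vs) auto
    ultimately show ?thesis by (intro exI[of _ "es@[g]"] exI[of _ "vs@[z]"]) simp
  qed
qed

lemma path_distinct_es:
  assumes "is_path F ends es vs" "distinct vs"
  shows "distinct es"
proof -
  have lv: "length vs = Suc (length es)" using assms by (simp add: is_path_def)
  { fix i j assume ij: "i < j" "j < length es" "es!i = es!j"
    have E: "\<forall>k<length es. ends (es!k) = {vs!k, vs!Suc k}" using assms(1) by (simp add: is_path_def)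
    have "ends (es!i) = {vs!i, vs!Suc i}" using E ij(1,2) less_trans by blast
    moreover have "ends (es!j) = {vs!j, vs!Suc j}" using E ij(2) by blast
    ultimately
    have "{vs!i, vs!Suc i} = {vs!j, vs!Suc j}" using ij(3) by metis
    hence "vs!i = vs!j \<or> vs!i = vs!Suc j" by blast
    moreover have "vs!i \<noteq> vs!j" using ij lv assms(2) nth_eq_iff_index_eq by fastforce
    moreover have "vs!i \<noteq> vs!Suc j" using ij lv assms(2) nth_eq_iff_index_eq by fastforce
    ultimately have False by blast }
  thus ?thesis unfolding distinct_conv_nth by (metis linorder_neqE_nat)
qed

lemma walk_cycle:
  assumes "acyclic_on T ends" "e \<in> T" "ends e = {x,y}"
  shows "\<not> (adj (T - {e}) ends)\<^sup>*\<^sup>* x y"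
proof
  assume "(adj (T - {e}) ends)\<^sup>*\<^sup>* x y"
  from walk_path[OF this] obtain es vs where p: "is_path (T - {e}) ends es vs" "distinct vs" "hd vs = x" "last vs = y"
    by blast
  have lv: "length vs = Suc (length es)" using p by (simp add: is_path_def)
  have pe: "set es \<subseteq> T - {e}" "\<forall>i<length es. ends (es!i) = {vs!i, vs!Suc i}"
    using p(1) unfolding is_path_def by auto
  have de: "distinct es" using path_distinct_es p by blast
  have vne: "vs \<noteq> []" using lv by auto
  have vy: "vs ! length es = y" using last_conv_nth[OF vne] p(4) lv by simp
  have vx: "vs ! 0 = x" using hd_conv_nth[OF vne] p(3) by simp
  have "is_cycle T ends (es@[e]) vs" unfolding is_cycle_def
  proof (intro conjI allI impI)
    show "length (es @ [e]) = length vs" using lv by simp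
    show "1 \<le> length (es @ [e])" by simp
    have "e \<notin> set es" using pe(1) by blast
    thus "distinct (es @ [e])" using de by simp
    show "distinct vs" by fact
    show "set (es @ [e]) \<subseteq> T" using pe(1) assms(2) by auto
    fix i assume i: "i < length (es @ [e])"
    show "ends ((es @ [e]) ! i) = {vs ! i, vs ! ((i + 1) mod length vs)}"
    proof (cases "i < length es")
      case True
      hence "(i + 1) mod length vs = Suc i" using lv by simp
      thus ?thesis using True pe(2) by (simp add: nth_append)
    next
      case False
      hence ii: "i = length es" using i by simp
      hence "(i + 1) mod length vs = 0" using lv by simp
      moreover have "{x,y} = {y,x}" by blast
      ultimately show ?thesis using ii assms(3) vx vy by (simp add: nth_append)
    qed
  qed
  thus False using assms(1) unfolding acyclic_on_def by blast
qed

lemma acyclic_mono: "acyclic_on T ends \<Longrightarrow> F \<subseteq> T \<Longrightarrow> acyclic_on F ends"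
  unfolding acyclic_on_def is_cycle_def by blast

lemma okE_ends: "okE V T ends \<Longrightarrow> e \<in> T \<Longrightarrow> \<exists>x y. ends e = {x,y} \<and> x \<noteq> y \<and> x \<in> V \<and> y \<in> V"
  unfolding okE_def by (metis card_2_iff insert_subset)

lemma comp_lift:
  assumes "(adj T ends)\<^sup>*\<^sup>* x u" "okE V T ends"
  shows "(adj {f\<in>T. ends f \<subseteq> {v\<in>V. (adj T ends)\<^sup>*\<^sup>* x v}} ends)\<^sup>*\<^sup>* x u"
  using assms(1)
proof (induction rule: rtranclp_induct)
  case base thus ?case by simp
next
  case (step y z)
  from step(2) obtain g where g: "g \<in> T" "ends g = {y,z}" unfolding adj_def by blast
  have "ends g \<subseteq> V" using g assms(2) unfolding okE_def by blast
  moreover have "(adj T ends)\<^sup>*\<^sup>* x z" using step(1,2) by simp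
  ultimately have "ends g \<subseteq> {v\<in>V. (adj T ends)\<^sup>*\<^sup>* x v}" using g step(1) by auto
  hence "adj {f\<in>T. ends f \<subseteq> {v\<in>V. (adj T ends)\<^sup>*\<^sup>* x v}} ends y z"
    using g unfolding adj_def by blast
  thus ?case using step(3) by simp
qed

lemma split_comp:
  assumes ok: "okE V T ends" and C: "C = {v\<in>V. (adj T ends)\<^sup>*\<^sup>* x v}"
  shows "T = {f\<in>T. ends f \<subseteq> C} \<union> {f\<in>T. ends f \<subseteq> V - C}"
    and "{f\<in>T. ends f \<subseteq> C} \<inter> {f\<in>T. ends f \<subseteq> V - C} = {}"
    and "x \<in> V \<Longrightarrow> connected_on C {f\<in>T. ends f \<subseteq> C} ends"
proof -
  have "f \<in> {f\<in>T. ends f \<subseteq> C} \<union> {f\<in>T. ends f \<subseteq> V - C}" if f: "f \<in> T" for f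
  proof -
    obtain p q where pq: "ends f = {p,q}" "p \<in> V" "q \<in> V" using okE_ends[OF ok f] by blast
    have a: "adj T ends p q" "adj T ends q p" using f pq unfolding adj_def by (auto simp: insert_commute)
    show ?thesis
    proof (cases "p \<in> C")
      case True
      hence "(adj T ends)\<^sup>*\<^sup>* x p" unfolding C by blast
      hence "(adj T ends)\<^sup>*\<^sup>* x q" using a(1) by (rule rtranclp.rtrancl_into_rtrancl)
      hence "q \<in> C" using pq unfolding C by blast
      thus ?thesis using True f pq by auto
    next
      case False
      have "q \<notin> C"
      proof
        assume "q \<in> C"
        hence "(adj T ends)\<^sup>*\<^sup>* x q" unfolding C by blast
        hence "(adj T ends)\<^sup>*\<^sup>* x p" using a(2) by (rule rtranclp.rtrancl_into_rtrancl)
        hence "p \<in> C" using pq unfolding C by blast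
        thus False using False by blast
      qed
      thus ?thesis using False f pq by auto
    qed
  qed
  thus "T = {f\<in>T. ends f \<subseteq> C} \<union> {f\<in>T. ends f \<subseteq> V - C}" by blast
  { fix f assume f: "f \<in> T" "ends f \<subseteq> C" "ends f \<subseteq> V - C"
    hence "ends f = {}" by blast
    moreover have "card (ends f) = 2" using ok f(1) unfolding okE_def by blast
    ultimately have False by simp }
  thus "{f\<in>T. ends f \<subseteq> C} \<inter> {f\<in>T. ends f \<subseteq> V - C} = {}" by blast
  assume xV: "x \<in> V"
  have cl: "(adj {f\<in>T. ends f \<subseteq> C} ends)\<^sup>*\<^sup>* x u" if "u \<in> C" for u
  proof -
    have "(adj T ends)\<^sup>*\<^sup>* x u" using that unfolding C by blast
    from comp_lift[OF this ok] show ?thesis unfolding C .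
  qed
  show "connected_on C {f\<in>T. ends f \<subseteq> C} ends"
    unfolding connected_on_def
  proof (intro conjI ballI)
    show "C \<noteq> {}" using xV unfolding C by auto
    fix u v assume "u \<in> C" "v \<in> C"
    from rtr_sym[OF cl[OF \<open>u \<in> C\<close>]] cl[OF \<open>v \<in> C\<close>]
    show "(adj {f\<in>T. ends f \<subseteq> C} ends)\<^sup>*\<^sup>* u v" by (rule rtranclp_trans)
  qed
qed

lemma okE_restr: "okE V T ends \<Longrightarrow> okE C {f\<in>T. ends f \<subseteq> C} ends"
  unfolding okE_def by blast

lemma card_CV:
  assumes "finite V" "C \<subseteq> V"
  shows "card V = card C + card (V - C)"
proof -
  have "V = C \<union> (V - C)" using assms(2) by blast
  hence "card V = card (C \<union> (V - C))" by simp
  also have "\<dots> = card C + card (V - C)"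
    by (rule card_Un_disjoint) (use assms finite_subset in auto)
  finally show ?thesis .
qed

lemma card_split:
  assumes "finite T" "T = A \<union> B" "A \<inter> B = {}"
  shows "card T = card A + card B"
  using assms card_Un_disjoint by (metis finite_Un)

lemma acyc_bound:
  assumes "finite V" "finite T" "okE V T ends" "acyclic_on T ends" "V \<noteq> {}"
  shows "card T + 1 \<le> card V"
using assms proof (induction "card T" arbitrary: V T rule: less_induct)
  case less
  show ?case
  proof (cases "T = {}")
    case True then show ?thesis using less by (simp add: Suc_le_eq card_gt_0_iff)
  next
    case False
    then obtain e where e: "e \<in> T" by blast
    then obtain x y where xy: "ends e = {x,y}" "x \<noteq> y" "x \<in> V" "y \<in> V"
      using okE_ends[OF less(4)] by blast
    define T' where "T' = T - {e}"
    define C where "C = {v\<in>V. (adj T' ends)\<^sup>*\<^sup>* x v}"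
    have okT: "okE V T' ends" using less(4) okE_mono unfolding T'_def by blast
    note sp = split_comp[OF okT C_def]
    have yC: "y \<notin> C" using walk_cycle[OF less(5) e xy(1)] unfolding C_def T'_def by blast
    have xC: "x \<in> C" using xy unfolding C_def by simp
    have CV: "C \<subseteq> V" unfolding C_def by blast
    have fT: "finite T'" using less(3) unfolding T'_def by simp
    have "card T > 0" using e less(3) card_gt_0_iff by blast
    hence cT: "card T = card T' + 1" using e less(3) unfolding T'_def
      by (simp add: card_Diff_singleton)
    have cT': "card T' = card {f\<in>T'. ends f \<subseteq> C} + card {f\<in>T'. ends f \<subseteq> V - C}"
      using card_split[OF fT sp(1,2)] .
    have h1: "card {f\<in>T'. ends f \<subseteq> C} + 1 \<le> card C"
    proof (rule less(1))
      have "card {f\<in>T'. ends f \<subseteq> C} \<le> card T'" by (rule card_mono[OF fT]) blast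
      thus "card {f\<in>T'. ends f \<subseteq> C} < card T" using cT by linarith
      show "finite C" using CV less(2) finite_subset by blast
      show "finite {f\<in>T'. ends f \<subseteq> C}" using fT by simp
      show "okE C {f\<in>T'. ends f \<subseteq> C} ends" by (rule okE_restr[OF okT])
      show "acyclic_on {f\<in>T'. ends f \<subseteq> C} ends" by (rule acyclic_mono[OF less(5)]) (auto simp: T'_def)
      show "C \<noteq> {}" using xC by blast
    qed
    have h2: "card {f\<in>T'. ends f \<subseteq> V - C} + 1 \<le> card (V - C)"
    proof (rule less(1))
      have "card {f\<in>T'. ends f \<subseteq> V - C} \<le> card T'" by (rule card_mono[OF fT]) blast
      thus "card {f\<in>T'. ends f \<subseteq> V - C} < card T" using cT by linarith
      show "finite (V - C)" using less(2) by blast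
      show "finite {f\<in>T'. ends f \<subseteq> V - C}" using fT by simp
      show "okE (V - C) {f\<in>T'. ends f \<subseteq> V - C} ends" by (rule okE_restr[OF okT])
      show "acyclic_on {f\<in>T'. ends f \<subseteq> V - C} ends" by (rule acyclic_mono[OF less(5)]) (auto simp: T'_def)
      show "V - C \<noteq> {}" using yC xy by blast
    qed
    have "card V = card C + card (V - C)"
      using less(2) CV by (rule card_CV)
    thus ?thesis using h1 h2 cT cT' by linarith
  qed
qed

lemma reach_xy:
  assumes "(adj T ends)\<^sup>*\<^sup>* x v" "ends e = {x,y}"
  shows "(adj (T - {e}) ends)\<^sup>*\<^sup>* x v \<or> (adj (T - {e}) ends)\<^sup>*\<^sup>* y v"
  using assms(1)
proof (induction rule: rtranclp_induct)
  case base thus ?case by simp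
next
  case (step v w)
  from step(2) obtain g where g: "g \<in> T" "ends g = {v,w}" unfolding adj_def by blast
  show ?case
  proof (cases "g = e")
    case True
    hence "w = x \<or> w = y" using g assms(2) by (metis doubleton_eq_iff)
    thus ?thesis by auto
  next
    case False
    hence "adj (T - {e}) ends v w" using g unfolding adj_def by blast
    thus ?thesis using step(3) by (meson rtranclp.rtrancl_into_rtrancl)
  qed
qed

lemma conn_bound:
  assumes "finite V" "finite T" "okE V T ends" "connected_on V T ends"
  shows "card V \<le> card T + 1"
using assms proof (induction "card T" arbitrary: V T rule: less_induct)
  case less
  show ?case
  proof (cases "T = {}")
    case True
    have "adj T ends = (\<lambda>_ _. False)" using True unfolding adj_def by auto
    hence "\<forall>u\<in>V. \<forall>v\<in>V. u = v" using less(5) unfolding connected_on_def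
      by (metis rtranclp.cases)
    thus ?thesis using card_le_Suc0_iff_eq[OF less(2)] by simp
  next
    case False
    then obtain e where e: "e \<in> T" by blast
    then obtain x y where xy: "ends e = {x,y}" "x \<noteq> y" "x \<in> V" "y \<in> V"
      using okE_ends[OF less(4)] by blast
    define T' where "T' = T - {e}"
    have okT: "okE V T' ends" using less(4) okE_mono unfolding T'_def by blast
    have fT: "finite T'" using less(3) unfolding T'_def by simp
    have "card T > 0" using e less(3) card_gt_0_iff by blast
    hence cT: "card T = card T' + 1" using e less(3) unfolding T'_def
      by (simp add: card_Diff_singleton)
    have reach: "(adj T' ends)\<^sup>*\<^sup>* x v \<or> (adj T' ends)\<^sup>*\<^sup>* y v" if "v \<in> V" for v
    proof -
      have "(adj T ends)\<^sup>*\<^sup>* x v" using less(5) xy(3) that unfolding connected_on_def by blast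
      thus ?thesis using reach_xy[of T ends x v e y] xy(1) unfolding T'_def by blast
    qed
    show ?thesis
    proof (cases "connected_on V T' ends")
      case True
      have "card V \<le> card T' + 1" using less(1)[OF _ less(2) fT okT True] cT by linarith
      thus ?thesis using cT by linarith
    next
      case False
      have nxy: "\<not> (adj T' ends)\<^sup>*\<^sup>* x y"
      proof
        assume h: "(adj T' ends)\<^sup>*\<^sup>* x y"
        have "\<forall>v\<in>V. (adj T' ends)\<^sup>*\<^sup>* x v" using reach h by (meson rtranclp_trans)
        hence "connected_on V T' ends" unfolding connected_on_def using xy(3)
          by (metis empty_iff rtr_sym rtranclp_trans)
        thus False using False by simp
      qed
      define C where "C = {v\<in>V. (adj T' ends)\<^sup>*\<^sup>* x v}"
      define D where "D = {v\<in>V. (adj T' ends)\<^sup>*\<^sup>* y v}"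
      have DC: "D = V - C"
      proof (intro equalityI subsetI)
        fix v assume "v \<in> D"
        moreover have "v \<notin> C" using \<open>v \<in> D\<close> nxy unfolding C_def D_def
          by (metis (mono_tags, lifting) mem_Collect_eq rtr_sym rtranclp_trans)
        ultimately show "v \<in> V - C" unfolding D_def by simp
      next
        fix v assume "v \<in> V - C" thus "v \<in> D" using reach unfolding C_def D_def by auto
      qed
      note sp = split_comp[OF okT C_def]
      note sp2 = split_comp[OF okT D_def]
      have CV: "C \<subseteq> V" unfolding C_def by blast
      have cT': "card T' = card {f\<in>T'. ends f \<subseteq> C} + card {f\<in>T'. ends f \<subseteq> V - C}"
        using card_split[OF fT sp(1,2)] .
      have h1: "card C \<le> card {f\<in>T'. ends f \<subseteq> C} + 1"
      proof (rule less(1))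
        have "card {f\<in>T'. ends f \<subseteq> C} \<le> card T'" by (rule card_mono[OF fT]) blast
        thus "card {f\<in>T'. ends f \<subseteq> C} < card T" using cT by linarith
        show "finite C" using CV less(2) finite_subset by blast
        show "finite {f\<in>T'. ends f \<subseteq> C}" using fT by simp
        show "okE C {f\<in>T'. ends f \<subseteq> C} ends" by (rule okE_restr[OF okT])
        show "connected_on C {f\<in>T'. ends f \<subseteq> C} ends" using sp(3) xy(3) by blast
      qed
      have h2: "card (V - C) \<le> card {f\<in>T'. ends f \<subseteq> V - C} + 1"
      proof (rule less(1))
        have "card {f\<in>T'. ends f \<subseteq> V - C} \<le> card T'" by (rule card_mono[OF fT]) blast
        thus "card {f\<in>T'. ends f \<subseteq> V - C} < card T" using cT by linarith
        show "finite (V - C)" using less(2) by blast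
        show "finite {f\<in>T'. ends f \<subseteq> V - C}" using fT by simp
        show "okE (V - C) {f\<in>T'. ends f \<subseteq> V - C} ends" by (rule okE_restr[OF okT])
        show "connected_on (V - C) {f\<in>T'. ends f \<subseteq> V - C} ends" using sp2(3) xy(4) DC by simp
      qed
      have "card V = card C + card (V - C)"
        using less(2) CV by (rule card_CV)
      thus ?thesis using h1 h2 cT cT' by linarith
    qed
  qed
qed

lemma cycle_remove:
  assumes cyc: "is_cycle T ends es vs" and con: "connected_on V T ends"
  shows "connected_on V (T - {es!0}) ends"
proof -
  define k where "k = length es"
  have lk: "length vs = k" "k \<ge> 1" "distinct es" "set es \<subseteq> T"
    and ed: "\<And>i. i < k \<Longrightarrow> ends (es!i) = {vs!i, vs!((i+1) mod k)}"
    using cyc unfolding is_cycle_def k_def by auto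
  let ?r = "adj (T - {es!0}) ends"
  have w: "j \<le> k \<Longrightarrow> ?r\<^sup>*\<^sup>* (vs!(1 mod k)) (vs!(j mod k))" if "1 \<le> j" for j
    using that
  proof (induction j rule: dec_induct)
    case base thus ?case by simp
  next
    case (step j)
    have jk: "j < k" using step by simp
    have "es!j \<noteq> es!0" using lk(3) jk step(1) unfolding k_def by (subst nth_eq_iff_index_eq) auto
    moreover have "es!j \<in> T" using lk(4) jk unfolding k_def by auto
    moreover have "ends (es!j) = {vs!(j mod k), vs!(Suc j mod k)}" using ed[OF jk] jk by simp
    ultimately have "?r (vs!(j mod k)) (vs!(Suc j mod k))" unfolding adj_def by blast
    moreover have "?r\<^sup>*\<^sup>* (vs!(1 mod k)) (vs!(j mod k))" using step.IH step.prems by simp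
    ultimately show ?case by (rule rtranclp.rtrancl_into_rtrancl[rotated])
  qed
  have w1: "?r\<^sup>*\<^sup>* (vs!(1 mod k)) (vs!0)" using w[of k] lk by simp
  have e0: "ends (es!0) = {vs!0, vs!(1 mod k)}" using ed[of 0] lk by simp
  have st: "?r\<^sup>*\<^sup>* u v" if a: "adj T ends u v" for u v
  proof -
    obtain g where g: "g \<in> T" "ends g = {u,v}" using a unfolding adj_def by blast
    show ?thesis
    proof (cases "g = es!0")
      case True
      have "{u,v} = {vs!0, vs!(1 mod k)}" using g e0 True by simp
      hence uv: "(u = vs!0 \<and> v = vs!(1 mod k)) \<or> (u = vs!(1 mod k) \<and> v = vs!0)"
        unfolding doubleton_eq_iff .
      have w2: "?r\<^sup>*\<^sup>* (vs!0) (vs!(1 mod k))" using rtr_sym[OF w1] .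
      from uv show ?thesis
      proof (elim disjE conjE)
        assume "u = vs!0" "v = vs!(1 mod k)" thus ?thesis using w2 by simp
      next
        assume "u = vs!(1 mod k)" "v = vs!0" thus ?thesis using w1 by simp
      qed
    next
      case False thus ?thesis using g unfolding adj_def by blast
    qed
  qed
  have "?r\<^sup>*\<^sup>* u v" if a: "(adj T ends)\<^sup>*\<^sup>* u v" for u v
    using a
  proof (induction rule: rtranclp_induct)
    case base show ?case by simp
  next
    case (step y z) show ?case by (rule rtranclp_trans[OF step.IH st[OF step(2)]])
  qed
  thus ?thesis using con unfolding connected_on_def by blast
qed

lemma conn_count_acyc:
  assumes "finite V" "finite T" "okE V T ends" "connected_on V T ends" "card T + 1 = card V"
  shows "acyclic_on T ends"
proof (rule ccontr)
  assume "\<not> acyclic_on T ends"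
  then obtain es vs where cyc: "is_cycle T ends es vs" unfolding acyclic_on_def by blast
  have l: "length es \<ge> 1" "set es \<subseteq> T" using cyc unfolding is_cycle_def by auto
  hence "es!0 \<in> set es" by (intro nth_mem) auto
  hence e0: "es!0 \<in> T" using l by blast
  hence "card T > 0" using assms(2) card_gt_0_iff by blast
  hence "card (T - {es!0}) + 1 = card T" using e0 assms(2) by (simp add: card_Diff_singleton)
  moreover have "card V \<le> card (T - {es!0}) + 1"
    using conn_bound[OF assms(1) _ okE_mono[OF assms(3)] cycle_remove[OF cyc assms(4)]] assms(2) by auto
  ultimately show False using assms(5) by linarith
qed

lemma acyc_conn:
  assumes "finite V" "finite T" "okE V T ends" "acyclic_on T ends" "card T + 1 = card V"
  shows "connected_on V T ends"
proof (rule ccontr)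
  assume nc: "\<not> connected_on V T ends"
  have "card V > 0" using assms(5) by simp
  hence "V \<noteq> {}" by auto
  then obtain x where xV: "x \<in> V" by blast
  define C where "C = {v\<in>V. (adj T ends)\<^sup>*\<^sup>* x v}"
  note sp = split_comp[OF assms(3) C_def]
  have CV: "C \<subseteq> V" unfolding C_def by blast
  have "C \<noteq> V"
  proof
    assume "C = V"
    have r: "\<forall>v\<in>V. (adj T ends)\<^sup>*\<^sup>* x v"
    proof
      fix v assume "v \<in> V"
      hence "v \<in> C" using \<open>C = V\<close> by simp
      thus "(adj T ends)\<^sup>*\<^sup>* x v" unfolding C_def by simp
    qed
    have "connected_on V T ends" unfolding connected_on_def
    proof (intro conjI ballI)
      show "V \<noteq> {}" using xV by blast
      fix u v assume "u \<in> V" "v \<in> V"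
      hence "(adj T ends)\<^sup>*\<^sup>* x u" "(adj T ends)\<^sup>*\<^sup>* x v" using r by auto
      thus "(adj T ends)\<^sup>*\<^sup>* u v" by (rule rtranclp_trans[OF rtr_sym])
    qed
    thus False using nc by simp
  qed
  hence "V - C \<noteq> {}" using CV by blast
  have xC: "x \<in> C" using xV unfolding C_def by simp
  have h1: "card {f\<in>T. ends f \<subseteq> C} + 1 \<le> card C"
  proof (rule acyc_bound)
    show "finite C" using CV assms(1) finite_subset by blast
    show "finite {f\<in>T. ends f \<subseteq> C}" using assms(2) by simp
    show "okE C {f\<in>T. ends f \<subseteq> C} ends" by (rule okE_restr[OF assms(3)])
    show "acyclic_on {f\<in>T. ends f \<subseteq> C} ends" by (rule acyclic_mono[OF assms(4)]) auto
    show "C \<noteq> {}" using xC by blast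
  qed
  have h2: "card {f\<in>T. ends f \<subseteq> V - C} + 1 \<le> card (V - C)"
  proof (rule acyc_bound)
    show "finite (V - C)" using assms(1) by blast
    show "finite {f\<in>T. ends f \<subseteq> V - C}" using assms(2) by simp
    show "okE (V - C) {f\<in>T. ends f \<subseteq> V - C} ends" by (rule okE_restr[OF assms(3)])
    show "acyclic_on {f\<in>T. ends f \<subseteq> V - C} ends" by (rule acyclic_mono[OF assms(4)]) auto
    show "V - C \<noteq> {}" by fact
  qed
  have "card V = card C + card (V - C)"
    using assms(1) CV by (rule card_CV)
  moreover have "card T = card {f\<in>T. ends f \<subseteq> C} + card {f\<in>T. ends f \<subseteq> V - C}"
    using card_split[OF assms(2) sp(1,2)] .
  ultimately show False using h1 h2 assms(5) by linarith
qed

lemma mg_ok: "multigraph V E ends \<Longrightarrow> okE V E ends \<and> finite V \<and> finite E"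
  unfolding multigraph_def okE_def by blast

lemma tree_card:
  assumes "multigraph V E ends" "spanning_tree V E ends T"
  shows "card T + 1 = card V"
proof -
  have TE: "T \<subseteq> E" using assms(2) unfolding spanning_tree_def by simp
  have m: "okE V T ends" "finite V" "finite T"
    using mg_ok[OF assms(1)] okE_mono[OF _ TE] finite_subset[OF TE] by auto
  have c: "connected_on V T ends" "acyclic_on T ends" using assms(2) unfolding spanning_tree_def by auto
  have "V \<noteq> {}" using c unfolding connected_on_def by simp
  thus ?thesis using conn_bound[OF m(2,3,1) c(1)] acyc_bound[OF m(2,3,1) c(2)] by linarith
qed

lemma tree_of_conn:
  assumes "multigraph V E ends" "T \<subseteq> E" "connected_on V T ends" "card T + 1 = card V"
  shows "spanning_tree V E ends T"
proof -
  have m: "okE V T ends" "finite V" "finite T"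
    using mg_ok[OF assms(1)] okE_mono[OF _ assms(2)] finite_subset[OF assms(2)] by auto
  thus ?thesis using conn_count_acyc[OF m(2,3,1) assms(3,4)] assms unfolding spanning_tree_def by simp
qed

lemma tree_of_acyc:
  assumes "multigraph V E ends" "T \<subseteq> E" "acyclic_on T ends" "card T + 1 = card V"
  shows "spanning_tree V E ends T"
proof -
  have m: "okE V T ends" "finite V" "finite T"
    using mg_ok[OF assms(1)] okE_mono[OF _ assms(2)] finite_subset[OF assms(2)] by auto
  thus ?thesis using acyc_conn[OF m(2,3,1) assms(3,4)] assms unfolding spanning_tree_def by simp
qed

lemma tree_eq:
  assumes "multigraph V E ends" "spanning_tree V E ends A" "spanning_tree V E ends B"
    "A - {d} = B - {d}"
  shows "A = B"
proof (rule ccontr)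
  assume ne: "A \<noteq> B"
  have f: "finite A" "finite B" using assms(2,3) mg_ok[OF assms(1)] finite_subset unfolding spanning_tree_def by auto
  have c: "card A = card B" using tree_card[OF assms(1,2)] tree_card[OF assms(1,3)] by simp
  show False
  proof (cases "d \<in> A")
    case True
    hence "d \<notin> B" using ne assms(4) by blast
    hence "B = A - {d}" using assms(4) by blast
    hence "card B < card A" using card_Diff1_less[OF f(1) True] by simp
    thus False using c by simp
  next
    case False
    hence "d \<in> B" using ne assms(4) by blast
    hence "A = B - {d}" using assms(4) False by blast
    hence "card A < card B" using card_Diff1_less[OF f(2) \<open>d \<in> B\<close>] by simp
    thus False using c by simp
  qed
qed

lemma tp_mem: "(S,T) \<in> tree_pairs V E ends \<longleftrightarrow> spanning_tree V E ends S \<and> spanning_tree V E ends T \<and>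
      S \<inter> T = {} \<and> S \<union> T = E"
  by (simp add: tree_pairs_def)

lemma ve_mem: "((S1,T1),(S2,T2)) \<in> V_eta V1 E1 ends1 d1 V2 E2 ends2 d2 \<longleftrightarrow>
   (S1, T1) \<in> tree_pairs V1 E1 ends1 \<and> (S2, T2) \<in> tree_pairs V2 E2 ends2 \<and>
        \<not> ((d1 \<in> S1 \<and> d2 \<in> S2) \<or> (d1 \<in> T1 \<and> d2 \<in> T2))"
  by (simp add: V_eta_def)

lemma sum_unf:
  assumes "two_clique_sum V E ends V1 E1 ends1 d1 V2 E2 ends2 d2"
  obtains f1 f2 where "d1 \<in> E1" "d2 \<in> E2" "E1 \<inter> E2 = {}" "E = (E1 - {d1}) \<union> (E2 - {d2})"
    "inj_on f1 V1" "inj_on f2 V2" "V = f1 ` V1 \<union> f2 ` V2"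
    "f1 ` V1 \<inter> f2 ` V2 = f1 ` ends1 d1" "f2 ` ends2 d2 = f1 ` ends1 d1"
    "\<forall>e\<in>E1 - {d1}. ends e = f1 ` ends1 e" "\<forall>e\<in>E2 - {d2}. ends e = f2 ` ends2 e"
  using assms unfolding two_clique_sum_def by (elim conjE exE) (rule that; assumption)

lemma sum_swap:
  assumes "two_clique_sum V E ends V1 E1 ends1 d1 V2 E2 ends2 d2"
  shows "two_clique_sum V E ends V2 E2 ends2 d2 V1 E1 ends1 d1"
proof -
  obtain f1 f2 where f: "d1 \<in> E1" "d2 \<in> E2" "E1 \<inter> E2 = {}" "E = (E1 - {d1}) \<union> (E2 - {d2})"
    "inj_on f1 V1" "inj_on f2 V2" "V = f1 ` V1 \<union> f2 ` V2"
    "f1 ` V1 \<inter> f2 ` V2 = f1 ` ends1 d1" "f2 ` ends2 d2 = f1 ` ends1 d1"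
    "\<forall>e\<in>E1 - {d1}. ends e = f1 ` ends1 e" "\<forall>e\<in>E2 - {d2}. ends e = f2 ` ends2 e"
    by (rule sum_unf[OF assms])
  have a: "f2 ` V2 \<inter> f1 ` V1 = f2 ` ends2 d2" using f(8,9) by (simp add: Int_commute)
  have b: "E2 \<inter> E1 = {}" using f(3) by (simp add: Int_commute)
  have c: "E = (E2 - {d2}) \<union> (E1 - {d1})" using f(4) by (simp add: Un_commute)
  have d: "V = f2 ` V2 \<union> f1 ` V1" using f(7) by (simp add: Un_commute)
  show ?thesis unfolding two_clique_sum_def
    using f(1,2,5,6,9,10,11) a b c d by metis
qed

lemma sum_cardV:
  assumes sum: "two_clique_sum V E ends V1 E1 ends1 d1 V2 E2 ends2 d2"
    and m1: "multigraph V1 E1 ends1" and m2: "multigraph V2 E2 ends2"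
  shows "card V + 2 = card V1 + card V2"
proof -
  obtain f1 f2 where f: "d1 \<in> E1" "d2 \<in> E2" "E1 \<inter> E2 = {}" "E = (E1 - {d1}) \<union> (E2 - {d2})"
    "inj_on f1 V1" "inj_on f2 V2" "V = f1 ` V1 \<union> f2 ` V2"
    "f1 ` V1 \<inter> f2 ` V2 = f1 ` ends1 d1" "f2 ` ends2 d2 = f1 ` ends1 d1"
    "\<forall>e\<in>E1 - {d1}. ends e = f1 ` ends1 e" "\<forall>e\<in>E2 - {d2}. ends e = f2 ` ends2 e"
    by (rule sum_unf[OF sum])
  have fin: "finite V1" "finite V2" using m1 m2 unfolding multigraph_def by auto
  have e: "ends1 d1 \<subseteq> V1" "card (ends1 d1) = 2" using m1 f(1) unfolding multigraph_def by auto
  have "card (f1 ` V1) + card (f2 ` V2) = card (f1 ` V1 \<union> f2 ` V2) + card (f1 ` V1 \<inter> f2 ` V2)"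
    by (rule card_Un_Int) (use fin in auto)
  moreover have "card (f1 ` V1) = card V1" by (rule card_image[OF f(5)])
  moreover have "card (f2 ` V2) = card V2" by (rule card_image[OF f(6)])
  moreover have "card (f1 ` ends1 d1) = 2" using card_image[OF inj_on_subset[OF f(5) e(1)]] e(2) by simp
  ultimately show ?thesis using f(7,8) by simp
qed

lemma sum_cardE:
  assumes sum: "two_clique_sum V E ends V1 E1 ends1 d1 V2 E2 ends2 d2"
    and fin: "finite E1" "finite E2"
  shows "card E + 2 = card E1 + card E2"
proof -
  obtain f1 f2 where f: "d1 \<in> E1" "d2 \<in> E2" "E1 \<inter> E2 = {}" "E = (E1 - {d1}) \<union> (E2 - {d2})"
    "inj_on f1 V1" "inj_on f2 V2" "V = f1 ` V1 \<union> f2 ` V2"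
    "f1 ` V1 \<inter> f2 ` V2 = f1 ` ends1 d1" "f2 ` ends2 d2 = f1 ` ends1 d1"
    "\<forall>e\<in>E1 - {d1}. ends e = f1 ` ends1 e" "\<forall>e\<in>E2 - {d2}. ends e = f2 ` ends2 e"
    by (rule sum_unf[OF sum])
  have "card E = card (E1 - {d1}) + card (E2 - {d2})"
    unfolding f(4) by (rule card_Un_disjoint) (use fin f(3) in auto)
  moreover have "card E1 > 0" "card E2 > 0" using fin f(1,2) card_gt_0_iff by blast+
  ultimately show ?thesis using fin f(1,2) by (simp add: card_Diff_singleton)
qed

lemma bisp_card:
  assumes m: "multigraph V E ends" and b: "bispanning V E ends"
  shows "card E + 2 = 2 * card V"
proof -
  obtain S T where st: "(S,T) \<in> tree_pairs V E ends" using b unfolding bispanning_def by auto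
  hence t: "spanning_tree V E ends S" "spanning_tree V E ends T" "S \<inter> T = {}" "S \<union> T = E"
    by (auto simp: tp_mem)
  have fin: "finite S" "finite T" using t(4) m unfolding multigraph_def by auto
  have "card E = card S + card T" using card_Un_disjoint[OF fin t(3)] t(4) by simp
  thus ?thesis using tree_card[OF m t(1)] tree_card[OF m t(2)] by linarith
qed

lemma combine:
  assumes sum: "two_clique_sum V E ends V1 E1 ends1 d1 V2 E2 ends2 d2"
    and m: "multigraph V E ends" "multigraph V1 E1 ends1" "multigraph V2 E2 ends2"
    and P: "spanning_tree V1 E1 ends1 P" "d1 \<notin> P" and Q: "spanning_tree V2 E2 ends2 Q" "d2 \<in> Q"
  shows "spanning_tree V E ends (P \<union> (Q - {d2}))"
proof -
  obtain f1 f2 where f: "d1 \<in> E1" "d2 \<in> E2" "E1 \<inter> E2 = {}" "E = (E1 - {d1}) \<union> (E2 - {d2})"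
    "inj_on f1 V1" "inj_on f2 V2" "V = f1 ` V1 \<union> f2 ` V2"
    "f1 ` V1 \<inter> f2 ` V2 = f1 ` ends1 d1" "f2 ` ends2 d2 = f1 ` ends1 d1"
    "\<forall>e\<in>E1 - {d1}. ends e = f1 ` ends1 e" "\<forall>e\<in>E2 - {d2}. ends e = f2 ` ends2 e"
    by (rule sum_unf[OF sum])
  have PE: "P \<subseteq> E1" "connected_on V1 P ends1" using P(1) unfolding spanning_tree_def by auto
  have QE: "Q \<subseteq> E2" "connected_on V2 Q ends2" using Q(1) unfolding spanning_tree_def by auto
  define R where "R = P \<union> (Q - {d2})"
  have RE: "R \<subseteq> E" unfolding R_def f(4) using PE(1) QE(1) P(2) by blast
  have cP: "card P + 1 = card V1" by (rule tree_card[OF m(2) P(1)])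
  have cQ: "card Q + 1 = card V2" by (rule tree_card[OF m(3) Q(1)])
  have fin: "finite P" "finite Q" using PE(1) QE(1) m(2,3) finite_subset unfolding multigraph_def by auto
  have "card R = card P + card (Q - {d2})" unfolding R_def
    by (rule card_Un_disjoint) (use fin PE(1) QE(1) f(3) in auto)
  moreover have "card Q > 0" using fin Q(2) card_gt_0_iff by blast
  hence "card (Q - {d2}) + 1 = card Q" using fin Q(2) by (simp add: card_Diff_singleton)
  moreover have "card V + 2 = card V1 + card V2" by (rule sum_cardV[OF sum m(2,3)])
  ultimately have cR: "card R + 1 = card V" using cP cQ by linarith
  have s1: "(adj R ends)\<^sup>*\<^sup>* (f1 p) (f1 q)" if pq: "p \<in> V1" "q \<in> V1" for p q
  proof -
    have w: "(adj P ends1)\<^sup>*\<^sup>* p q" using PE(2) pq unfolding connected_on_def by blast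
    show ?thesis
    proof (rule rtr_map[where P="\<lambda>_. True" and s="adj R ends" and g=f1, OF w])
      fix u v assume "adj P ends1 u v"
      then obtain h where h: "h \<in> P" "ends1 h = {u,v}" unfolding adj_def by blast
      have "h \<in> E1 - {d1}" using h(1) PE(1) P(2) by blast
      hence "ends h = {f1 u, f1 v}" using f(10) h(2) by simp
      moreover have "h \<in> R" using h(1) unfolding R_def by blast
      ultimately have "adj R ends (f1 u) (f1 v)" unfolding adj_def by blast
      thus "True \<and> (adj R ends)\<^sup>*\<^sup>* (f1 u) (f1 v)" by simp
    qed simp
  qed
  have e1V: "ends1 d1 \<subseteq> V1" "card (ends1 d1) = 2" using m(2) f(1) unfolding multigraph_def by auto
  have e2V: "ends2 d2 \<subseteq> V2" using m(3) f(2) unfolding multigraph_def by auto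
  have anch: "\<exists>p\<in>V1. f2 u = f1 p" if "u \<in> ends2 d2" for u
  proof -
    have "f2 u \<in> f1 ` ends1 d1" using that f(9) by blast
    thus ?thesis using e1V(1) by blast
  qed
  have s2: "(adj R ends)\<^sup>*\<^sup>* (f2 p) (f2 q)" if pq: "p \<in> V2" "q \<in> V2" for p q
  proof -
    have w: "(adj Q ends2)\<^sup>*\<^sup>* p q" using QE(2) pq unfolding connected_on_def by blast
    show ?thesis
    proof (rule rtr_map[where P="\<lambda>_. True" and s="adj R ends" and g=f2, OF w])
      fix u v assume "adj Q ends2 u v"
      then obtain h where h: "h \<in> Q" "ends2 h = {u,v}" unfolding adj_def by blast
      show "True \<and> (adj R ends)\<^sup>*\<^sup>* (f2 u) (f2 v)"
      proof (cases "h = d2")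
        case True
        hence "u \<in> ends2 d2" "v \<in> ends2 d2" using h(2) by auto
        obtain p' where p': "p' \<in> V1" "f2 u = f1 p'" using anch[OF \<open>u \<in> ends2 d2\<close>] by blast
        obtain q' where q': "q' \<in> V1" "f2 v = f1 q'" using anch[OF \<open>v \<in> ends2 d2\<close>] by blast
        show ?thesis using s1[OF p'(1) q'(1)] p'(2) q'(2) by simp
      next
        case False
        hence "h \<in> E2 - {d2}" using h(1) QE(1) by blast
        hence "ends h = {f2 u, f2 v}" using f(11) h(2) by simp
        moreover have "h \<in> R" using h(1) False unfolding R_def by blast
        ultimately have "adj R ends (f2 u) (f2 v)" unfolding adj_def by blast
        thus ?thesis by simp
      qed
    qed simp
  qed
  obtain x y where "ends1 d1 = {x,y}" using e1V(2) card_2_iff by meson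
  hence a1: "x \<in> ends1 d1" by simp
  define a1 where "a1 = x"
  have a1V: "a1 \<in> V1" using a1 e1V(1) unfolding a1_def by blast
  have "f1 a1 \<in> f2 ` ends2 d2" using a1 f(9) unfolding a1_def by simp
  then obtain a2 where a2: "a2 \<in> ends2 d2" "f2 a2 = f1 a1" by (metis imageE)
  have a2V: "a2 \<in> V2" using a2(1) e2V by blast
  have reach: "(adj R ends)\<^sup>*\<^sup>* (f1 a1) w" if "w \<in> V" for w
  proof -
    from that f(7) consider (l) p where "p \<in> V1" "w = f1 p" | (r) p where "p \<in> V2" "w = f2 p" by blast
    thus ?thesis
    proof cases
      case l thus ?thesis using s1 a1V by simp
    next
      case r thus ?thesis using s2[OF a2V] a2(2) by simp
    qed
  qed
  have conn: "connected_on V R ends" unfolding connected_on_def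
  proof (intro conjI ballI)
    show "V \<noteq> {}" using a1V f(7) by blast
    fix u v assume "u \<in> V" "v \<in> V"
    from rtr_sym[OF reach[OF \<open>u \<in> V\<close>]] reach[OF \<open>v \<in> V\<close>]
    show "(adj R ends)\<^sup>*\<^sup>* u v" by (rule rtranclp_trans)
  qed
  show ?thesis using tree_of_conn[OF m(1) RE conn cR] unfolding R_def .
qed

lemma project:
  assumes sum: "two_clique_sum V E ends V1 E1 ends1 d1 V2 E2 ends2 d2"
    and m: "multigraph V E ends" "multigraph V1 E1 ends1" "multigraph V2 E2 ends2"
    and T: "spanning_tree V E ends P"
  shows "acyclic_on (P \<inter> E1) ends1" and "connected_on V1 (P \<inter> E1 \<union> {d1}) ends1"
proof -
  obtain f1 f2 where f: "d1 \<in> E1" "d2 \<in> E2" "E1 \<inter> E2 = {}" "E = (E1 - {d1}) \<union> (E2 - {d2})"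
    "inj_on f1 V1" "inj_on f2 V2" "V = f1 ` V1 \<union> f2 ` V2"
    "f1 ` V1 \<inter> f2 ` V2 = f1 ` ends1 d1" "f2 ` ends2 d2 = f1 ` ends1 d1"
    "\<forall>e\<in>E1 - {d1}. ends e = f1 ` ends1 e" "\<forall>e\<in>E2 - {d2}. ends e = f2 ` ends2 e"
    by (rule sum_unf[OF sum])
  have PE: "P \<subseteq> E" "connected_on V P ends" "acyclic_on P ends" using T unfolding spanning_tree_def by auto
  have PE1: "P \<inter> E1 \<subseteq> E1 - {d1}" using PE(1) f(4) f(3) f(1) by blast
  have mE1: "\<forall>e\<in>E1. ends1 e \<subseteq> V1 \<and> card (ends1 e) = 2" using m(2) unfolding multigraph_def by blast
  have mE: "\<forall>e\<in>E. ends e \<subseteq> V \<and> card (ends e) = 2" using m(1) unfolding multigraph_def by blast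
  show "acyclic_on (P \<inter> E1) ends1" unfolding acyclic_on_def
  proof
    assume "\<exists>es vs. is_cycle (P \<inter> E1) ends1 es vs"
    then obtain es vs where c: "is_cycle (P \<inter> E1) ends1 es vs" by blast
    have c1: "length es = length vs" "length es \<ge> 1" "distinct es" "distinct vs" "set es \<subseteq> P \<inter> E1"
      and c2: "\<forall>i<length es. ends1 (es ! i) = {vs ! i, vs ! ((i + 1) mod length vs)}"
      using c unfolding is_cycle_def by auto
    have vsV: "set vs \<subseteq> V1"
    proof
      fix v assume "v \<in> set vs"
      then obtain i where i: "i < length vs" "vs ! i = v" by (auto simp: in_set_conv_nth)
      have "es ! i \<in> E1" using c1(1,5) i(1) nth_mem by fastforce
      moreover have "v \<in> ends1 (es ! i)" using c2 i c1(1) by auto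
      ultimately show "v \<in> V1" using mE1 by blast
    qed
    have "is_cycle P ends es (map f1 vs)" unfolding is_cycle_def
    proof (intro conjI allI impI)
      show "length es = length (map f1 vs)" using c1(1) by simp
      show "1 \<le> length es" by fact
      show "distinct es" by fact
      show "distinct (map f1 vs)" using c1(4) inj_on_subset[OF f(5) vsV] by (simp add: distinct_map)
      show "set es \<subseteq> P" using c1(5) by blast
      fix i assume i: "i < length es"
      have "es ! i \<in> P \<inter> E1" using c1(5) i nth_mem by blast
      hence "es ! i \<in> E1 - {d1}" using PE1 by blast
      hence "ends (es ! i) = f1 ` ends1 (es ! i)" using f(10) by blast
      also have "\<dots> = {f1 (vs ! i), f1 (vs ! ((i + 1) mod length vs))}" using c2 i by simp
      also have "\<dots> = {map f1 vs ! i, map f1 vs ! ((i + 1) mod length (map f1 vs))}"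
      proof -
        have "(i + 1) mod length vs < length vs" using i c1(1) by (intro mod_less_divisor) auto
        thus ?thesis using i c1(1) by simp
      qed
      finally show "ends (es ! i) = {map f1 vs ! i, map f1 vs ! ((i + 1) mod length (map f1 vs))}" .
    qed
    thus False using PE(3) unfolding acyclic_on_def by blast
  qed
  have e1V: "ends1 d1 \<subseteq> V1" "card (ends1 d1) = 2" using mE1 f(1) by auto
  obtain a1 b1 where ab: "ends1 d1 = {a1,b1}" using e1V(2) card_2_iff by meson
  have abV: "a1 \<in> V1" "b1 \<in> V1" using ab e1V(1) by auto
  define pi where "pi = (\<lambda>v. if v \<in> f1 ` V1 then inv_into V1 f1 v else a1)"
  have pif: "pi (f1 p) = p" if "p \<in> V1" for p
    using that f(5) unfolding pi_def by (simp add: inv_into_f_f)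
  define R where "R = P \<inter> E1 \<union> {d1}"
  have dR: "adj R ends1 a1 b1" "adj R ends1 b1 a1" unfolding R_def adj_def using ab
    by (auto simp: insert_commute)
  have abany: "(adj R ends1)\<^sup>*\<^sup>* z z'" if "z \<in> {a1,b1}" "z' \<in> {a1,b1}" for z z'
    using that dR by auto
  have pi2: "pi v \<in> {a1,b1}" if "v \<in> f2 ` V2" for v
  proof (cases "v \<in> f1 ` V1")
    case True
    hence "v \<in> f1 ` ends1 d1" using that f(8) by blast
    hence "v = f1 a1 \<or> v = f1 b1" using ab by auto
    thus ?thesis using pif abV by auto
  next
    case False thus ?thesis unfolding pi_def by simp
  qed
  have step: "v \<in> V \<and> (adj R ends1)\<^sup>*\<^sup>* (pi u) (pi v)" if uv: "u \<in> V" "adj P ends u v" for u v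
  proof -
    obtain h where h: "h \<in> P" "ends h = {u,v}" using uv(2) unfolding adj_def by blast
    have hE: "h \<in> E" using h(1) PE(1) by blast
    have vV: "v \<in> V" using mE hE h(2) by blast
    have "(adj R ends1)\<^sup>*\<^sup>* (pi u) (pi v)"
    proof (cases "h \<in> E1 - {d1}")
      case True
      obtain p q where pq: "ends1 h = {p,q}" using mE1 True card_2_iff by (metis DiffD1)
      have pqV: "p \<in> V1" "q \<in> V1" using mE1 True pq by auto
      have "{u,v} = {f1 p, f1 q}" using f(10) True h(2) pq by simp
      hence o: "(u = f1 p \<and> v = f1 q) \<or> (u = f1 q \<and> v = f1 p)" unfolding doubleton_eq_iff by blast
      have hR: "h \<in> R" using h(1) True unfolding R_def by blast
      have a: "adj R ends1 p q" "adj R ends1 q p" using hR pq unfolding adj_def by (auto simp: insert_commute)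
      from o show ?thesis
      proof (elim disjE conjE)
        assume "u = f1 p" "v = f1 q" thus ?thesis using a pif pqV by simp
      next
        assume "u = f1 q" "v = f1 p" thus ?thesis using a pif pqV by simp
      qed
    next
      case False
      hence "h \<in> E2 - {d2}" using hE f(4) by blast
      hence "ends h = f2 ` ends2 h" using f(11) by blast
      moreover have "ends2 h \<subseteq> V2" using m(3) \<open>h \<in> E2 - {d2}\<close> unfolding multigraph_def by blast
      ultimately have sub: "ends h \<subseteq> f2 ` V2" by (simp add: image_mono)
      have "u \<in> f2 ` V2" "v \<in> f2 ` V2" using sub h(2) by auto
      thus ?thesis using pi2 abany by blast
    qed
    thus ?thesis using vV by simp
  qed
  show "connected_on V1 (P \<inter> E1 \<union> {d1}) ends1" unfolding connected_on_def R_def[symmetric]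
  proof (intro conjI ballI)
    show "V1 \<noteq> {}" using abV by blast
    fix p q assume pq: "p \<in> V1" "q \<in> V1"
    have fV: "f1 p \<in> V" "f1 q \<in> V" using pq f(7) by auto
    have w: "(adj P ends)\<^sup>*\<^sup>* (f1 p) (f1 q)" using PE(2) fV unfolding connected_on_def by blast
    have "(adj R ends1)\<^sup>*\<^sup>* (pi (f1 p)) (pi (f1 q))"
      by (rule rtr_map[where P="\<lambda>u. u \<in> V", OF w fV(1) step])
    thus "(adj R ends1)\<^sup>*\<^sup>* p q" using pif pq by simp
  qed
qed

lemma side:
  assumes sum: "two_clique_sum V E ends V1 E1 ends1 d1 V2 E2 ends2 d2"
    and m: "multigraph V E ends" "multigraph V1 E1 ends1" "multigraph V2 E2 ends2"
    and T: "spanning_tree V E ends P"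
  shows "card V1 \<le> card (P \<inter> E1) + 2"
    and "card (P \<inter> E1) + 1 = card V1 \<Longrightarrow> spanning_tree V1 E1 ends1 (P \<inter> E1)"
    and "card (P \<inter> E1) + 2 = card V1 \<Longrightarrow> spanning_tree V1 E1 ends1 (P \<inter> E1 \<union> {d1})"
proof -
  obtain f1 f2 where f: "d1 \<in> E1" "d2 \<in> E2" "E1 \<inter> E2 = {}" "E = (E1 - {d1}) \<union> (E2 - {d2})"
    by (rule sum_unf[OF sum])
  have PE: "P \<subseteq> E" using T unfolding spanning_tree_def by simp
  have dP: "d1 \<notin> P" using PE f by blast
  have mo: "okE V1 E1 ends1" "finite V1" "finite E1" using mg_ok[OF m(2)] by auto
  have fin: "finite (P \<inter> E1)" using mo(3) by simp
  have sub: "P \<inter> E1 \<union> {d1} \<subseteq> E1" "P \<inter> E1 \<subseteq> E1" using f(1) by auto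
  have cd: "card (P \<inter> E1 \<union> {d1}) = card (P \<inter> E1) + 1" using fin dP by simp
  note pr = project[OF sum m T]
  show "card V1 \<le> card (P \<inter> E1) + 2"
    using conn_bound[OF mo(2) _ okE_mono[OF mo(1) sub(1)] pr(2)] fin cd by simp
  show "card (P \<inter> E1) + 1 = card V1 \<Longrightarrow> spanning_tree V1 E1 ends1 (P \<inter> E1)"
    by (rule tree_of_acyc[OF m(2) sub(2) pr(1)])
  assume "card (P \<inter> E1) + 2 = card V1"
  hence "card (P \<inter> E1 \<union> {d1}) + 1 = card V1" using cd by simp
  thus "spanning_tree V1 E1 ends1 (P \<inter> E1 \<union> {d1})"
    by (rule tree_of_conn[OF m(2) sub(1) pr(2)])
qed

lemma tp_swap: "(S,T) \<in> tree_pairs V E ends \<Longrightarrow> (T,S) \<in> tree_pairs V E ends"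
  unfolding tp_mem by blast

lemma into_case:
  assumes sum: "two_clique_sum V E ends V1 E1 ends1 d1 V2 E2 ends2 d2"
    and m: "multigraph V E ends" "multigraph V1 E1 ends1" "multigraph V2 E2 ends2"
    and t1: "(S1,T1) \<in> tree_pairs V1 E1 ends1" and t2: "(S2,T2) \<in> tree_pairs V2 E2 ends2"
    and d: "d1 \<notin> S1" "d2 \<in> S2"
  shows "(S1 \<union> S2 - {d1,d2}, T1 \<union> T2 - {d1,d2}) \<in> tree_pairs V E ends"
proof -
  obtain f1 f2 where f: "d1 \<in> E1" "d2 \<in> E2" "E1 \<inter> E2 = {}" "E = (E1 - {d1}) \<union> (E2 - {d2})"
    by (rule sum_unf[OF sum])
  have a1: "spanning_tree V1 E1 ends1 S1" "spanning_tree V1 E1 ends1 T1" "S1 \<inter> T1 = {}" "S1 \<union> T1 = E1"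
    using t1 unfolding tp_mem by auto
  have a2: "spanning_tree V2 E2 ends2 S2" "spanning_tree V2 E2 ends2 T2" "S2 \<inter> T2 = {}" "S2 \<union> T2 = E2"
    using t2 unfolding tp_mem by auto
  have dT: "d1 \<in> T1" "d2 \<notin> T2" using d f(1) a1(3,4) a2(3) by blast+
  have eS: "S1 \<union> S2 - {d1,d2} = S1 \<union> (S2 - {d2})" using d f(1,2,3) a1(4) a2(4) by blast
  have eT: "T1 \<union> T2 - {d1,d2} = T2 \<union> (T1 - {d1})" using dT f(1,2,3) a1(4) a2(4) by blast
  have sS: "spanning_tree V E ends (S1 \<union> S2 - {d1,d2})"
    unfolding eS by (rule combine[OF sum m a1(1) d(1) a2(1) d(2)])
  have sT: "spanning_tree V E ends (T1 \<union> T2 - {d1,d2})"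
    unfolding eT by (rule combine[OF sum_swap[OF sum] m(1,3,2) a2(2) dT(2) a1(2) dT(1)])
  have dis: "(S1 \<union> S2 - {d1,d2}) \<inter> (T1 \<union> T2 - {d1,d2}) = {}"
    using a1(3,4) a2(3,4) f(3) by blast
  have un: "(S1 \<union> S2 - {d1,d2}) \<union> (T1 \<union> T2 - {d1,d2}) = E"
    using a1(4) a2(4) f by blast
  show ?thesis unfolding tp_mem using sS sT dis un by blast
qed

lemma onto_case:
  assumes sum: "two_clique_sum V E ends V1 E1 ends1 d1 V2 E2 ends2 d2"
    and m: "multigraph V E ends" "multigraph V1 E1 ends1" "multigraph V2 E2 ends2"
    and st: "(S,T) \<in> tree_pairs V E ends"
    and c: "card (S \<inter> E1) + 1 = card V1" "card (T \<inter> E1) + 2 = card V1"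
      "card (S \<inter> E2) + 2 = card V2" "card (T \<inter> E2) + 1 = card V2"
  shows "((S \<inter> E1, T \<inter> E1 \<union> {d1}), (S \<inter> E2 \<union> {d2}, T \<inter> E2)) \<in> V_eta V1 E1 ends1 d1 V2 E2 ends2 d2"
    and "S \<inter> E1 \<union> (S \<inter> E2 \<union> {d2}) - {d1,d2} = S" "T \<inter> E1 \<union> {d1} \<union> T \<inter> E2 - {d1,d2} = T"
proof -
  obtain f1 f2 where f: "d1 \<in> E1" "d2 \<in> E2" "E1 \<inter> E2 = {}" "E = (E1 - {d1}) \<union> (E2 - {d2})"
    by (rule sum_unf[OF sum])
  have a: "spanning_tree V E ends S" "spanning_tree V E ends T" "S \<inter> T = {}" "S \<union> T = E"
    using st unfolding tp_mem by auto
  note sS1 = side[OF sum m a(1)] and sT1 = side[OF sum m a(2)]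
  note sS2 = side[OF sum_swap[OF sum] m(1,3,2) a(1)] and sT2 = side[OF sum_swap[OF sum] m(1,3,2) a(2)]
  have p1: "(S \<inter> E1, T \<inter> E1 \<union> {d1}) \<in> tree_pairs V1 E1 ends1"
    unfolding tp_mem using sS1(2)[OF c(1)] sT1(3)[OF c(2)] a(3,4) f by blast
  have p2: "(S \<inter> E2 \<union> {d2}, T \<inter> E2) \<in> tree_pairs V2 E2 ends2"
    unfolding tp_mem using sS2(3)[OF c(3)] sT2(2)[OF c(4)] a(3,4) f by blast
  have nd: "d1 \<notin> S" "d2 \<notin> T" using a(4) f by blast+
  show "((S \<inter> E1, T \<inter> E1 \<union> {d1}), (S \<inter> E2 \<union> {d2}, T \<inter> E2)) \<in> V_eta V1 E1 ends1 d1 V2 E2 ends2 d2"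
    unfolding ve_mem using p1 p2 nd by blast
  show "S \<inter> E1 \<union> (S \<inter> E2 \<union> {d2}) - {d1,d2} = S" using a(4) f by blast
  show "T \<inter> E1 \<union> {d1} \<union> T \<inter> E2 - {d1,d2} = T" using a(4) f by blast
qed

theorem mainTheorem19:
  fixes V :: "'v set" and E :: "'e set" and ends :: "'e \<Rightarrow> 'v set"
    and V1 :: "'v1 set" and E1 :: "'e set" and ends1 :: "'e \<Rightarrow> 'v1 set" and d1 :: 'e
    and V2 :: "'v2 set" and E2 :: "'e set" and ends2 :: "'e \<Rightarrow> 'v2 set" and d2 :: 'e
  assumes "multigraph V E ends"
    and "atomic V E ends"
    and "vertex_connectivity V E ends = 2"
    and "simple_graph V1 E1 ends1" and "bispanning V1 E1 ends1"
    and "simple_graph V2 E2 ends2" and "bispanning V2 E2 ends2"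
    and "two_clique_sum V E ends V1 E1 ends1 d1 V2 E2 ends2 d2"
  shows "\<exists>\<phi>. bij_betw \<phi> (tree_pairs V E ends) (V_eta V1 E1 ends1 d1 V2 E2 ends2 d2)"
proof -
  note sum = assms(8)
  have m1: "multigraph V1 E1 ends1" using assms(4) unfolding simple_graph_def by simp
  have m2: "multigraph V2 E2 ends2" using assms(6) unfolding simple_graph_def by simp
  note m = assms(1) m1 m2
  obtain f1 f2 where f: "d1 \<in> E1" "d2 \<in> E2" "E1 \<inter> E2 = {}" "E = (E1 - {d1}) \<union> (E2 - {d2})"
    by (rule sum_unf[OF sum])
  have cE1: "card E1 + 2 = 2 * card V1" by (rule bisp_card[OF m1 assms(5)])
  have cE2: "card E2 + 2 = 2 * card V2" by (rule bisp_card[OF m2 assms(7)])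
  have cV: "card V + 2 = card V1 + card V2" by (rule sum_cardV[OF sum m1 m2])
  have finE: "finite E1" "finite E2" "finite E" using mg_ok[OF m1] mg_ok[OF m2] mg_ok[OF assms(1)] by auto
  define psi :: "('e set \<times> 'e set) \<times> ('e set \<times> 'e set) \<Rightarrow> 'e set \<times> 'e set"
    where "psi = (\<lambda>((S1,T1),(S2,T2)). (S1 \<union> S2 - {d1,d2}, T1 \<union> T2 - {d1,d2}))"
  let ?A = "V_eta V1 E1 ends1 d1 V2 E2 ends2 d2"
  let ?B = "tree_pairs V E ends"
  have into: "psi x \<in> ?B" if xA: "x \<in> ?A" for x
  proof -
    obtain S1 T1 S2 T2 where x: "x = ((S1,T1),(S2,T2))" by (metis prod.exhaust)
    have h: "(S1,T1) \<in> tree_pairs V1 E1 ends1" "(S2,T2) \<in> tree_pairs V2 E2 ends2"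
      "\<not> ((d1 \<in> S1 \<and> d2 \<in> S2) \<or> (d1 \<in> T1 \<and> d2 \<in> T2))"
      using xA unfolding x ve_mem by auto
    have e1: "S1 \<union> T1 = E1" using h(1) unfolding tp_mem by auto
    have e2: "S2 \<union> T2 = E2" using h(2) unfolding tp_mem by auto
    have px: "psi x = (S1 \<union> S2 - {d1,d2}, T1 \<union> T2 - {d1,d2})" unfolding x psi_def by simp
    show ?thesis
    proof (cases "d1 \<in> S1")
      case False
      hence "d1 \<in> T1" using e1 f(1) by blast
      hence "d2 \<in> S2" using h(3) e2 f(2) by blast
      thus ?thesis using into_case[OF sum m h(1) h(2) False] px by simp
    next
      case True
      hence d2: "d2 \<notin> S2" using h(3) by blast
      have "(S2 \<union> S1 - {d2,d1}, T2 \<union> T1 - {d2,d1}) \<in> ?B"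
        by (rule into_case[OF sum_swap[OF sum] m(1,3,2) h(2) h(1) d2 True])
      moreover have "S2 \<union> S1 - {d2,d1} = S1 \<union> S2 - {d1,d2}" "T2 \<union> T1 - {d2,d1} = T1 \<union> T2 - {d1,d2}"
        by blast+
      ultimately show ?thesis using px by simp
    qed
  qed
  have inj: "inj_on psi ?A"
  proof (rule inj_onI)
    fix x y assume xA: "x \<in> ?A" and yA: "y \<in> ?A" and eq: "psi x = psi y"
    obtain S1 T1 S2 T2 where x: "x = ((S1,T1),(S2,T2))" by (metis prod.exhaust)
    obtain S1' T1' S2' T2' where y: "y = ((S1',T1'),(S2',T2'))" by (metis prod.exhaust)
    have h: "(S1,T1) \<in> tree_pairs V1 E1 ends1" "(S2,T2) \<in> tree_pairs V2 E2 ends2"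
      using xA unfolding x ve_mem by auto
    have h': "(S1',T1') \<in> tree_pairs V1 E1 ends1" "(S2',T2') \<in> tree_pairs V2 E2 ends2"
      using yA unfolding y ve_mem by auto
    have a1: "spanning_tree V1 E1 ends1 S1" "spanning_tree V1 E1 ends1 T1" "S1 \<union> T1 = E1"
      using h(1) unfolding tp_mem by auto
    have a2: "spanning_tree V2 E2 ends2 S2" "spanning_tree V2 E2 ends2 T2" "S2 \<union> T2 = E2"
      using h(2) unfolding tp_mem by auto
    have b1: "spanning_tree V1 E1 ends1 S1'" "spanning_tree V1 E1 ends1 T1'" "S1' \<union> T1' = E1"
      using h'(1) unfolding tp_mem by auto
    have b2: "spanning_tree V2 E2 ends2 S2'" "spanning_tree V2 E2 ends2 T2'" "S2' \<union> T2' = E2"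
      using h'(2) unfolding tp_mem by auto
    have eqS: "S1 \<union> S2 - {d1,d2} = S1' \<union> S2' - {d1,d2}" and eqT: "T1 \<union> T2 - {d1,d2} = T1' \<union> T2' - {d1,d2}"
      using eq unfolding x y psi_def by simp_all
    have "S1 - {d1} = S1' - {d1}" using eqS a1(3) a2(3) b1(3) b2(3) f(2,3) by blast
    hence "S1 = S1'" by (rule tree_eq[OF m1 a1(1) b1(1)])
    moreover have "T1 - {d1} = T1' - {d1}" using eqT a1(3) a2(3) b1(3) b2(3) f(2,3) by blast
    hence "T1 = T1'" by (rule tree_eq[OF m1 a1(2) b1(2)])
    moreover have "S2 - {d2} = S2' - {d2}" using eqS a1(3) a2(3) b1(3) b2(3) f(1,3) by blast
    hence "S2 = S2'" by (rule tree_eq[OF m2 a2(1) b2(1)])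
    moreover have "T2 - {d2} = T2' - {d2}" using eqT a1(3) a2(3) b1(3) b2(3) f(1,3) by blast
    hence "T2 = T2'" by (rule tree_eq[OF m2 a2(2) b2(2)])
    ultimately show "x = y" unfolding x y by simp
  qed
  have onto: "?B \<subseteq> psi ` ?A"
  proof
    fix st assume stB: "st \<in> ?B"
    obtain S T where st: "st = (S,T)" by (metis prod.exhaust)
    have stm: "(S,T) \<in> ?B" using stB st by simp
    have a: "spanning_tree V E ends S" "spanning_tree V E ends T" "S \<inter> T = {}" "S \<union> T = E"
      using stm unfolding tp_mem by auto
    have cS: "card S + 1 = card V" by (rule tree_card[OF assms(1) a(1)])
    have cT: "card T + 1 = card V" by (rule tree_card[OF assms(1) a(2)])
    have finS: "finite S" "finite T" using finE(3) a(4) by (auto intro: finite_subset)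
    have "card S = card (S \<inter> E1) + card (S \<inter> E2)"
    proof -
      have "S = (S \<inter> E1) \<union> (S \<inter> E2)" using a(4) f(4) by blast
      moreover have "card ((S \<inter> E1) \<union> (S \<inter> E2)) = card (S \<inter> E1) + card (S \<inter> E2)"
        by (rule card_Un_disjoint) (use finS f(3) in auto)
      ultimately show ?thesis by simp
    qed
    moreover have "card T = card (T \<inter> E1) + card (T \<inter> E2)"
    proof -
      have "T = (T \<inter> E1) \<union> (T \<inter> E2)" using a(4) f(4) by blast
      moreover have "card ((T \<inter> E1) \<union> (T \<inter> E2)) = card (T \<inter> E1) + card (T \<inter> E2)"
        by (rule card_Un_disjoint) (use finS f(3) in auto)
      ultimately show ?thesis by simp
    qed
    moreover have "card (S \<inter> E1) + card (T \<inter> E1) + 1 = card E1"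
    proof -
      have "(S \<inter> E1) \<union> (T \<inter> E1) = E1 - {d1}" using a(4) f by blast
      moreover have "card ((S \<inter> E1) \<union> (T \<inter> E1)) = card (S \<inter> E1) + card (T \<inter> E1)"
        by (rule card_Un_disjoint) (use finS a(3) in auto)
      moreover have "card (E1 - {d1}) + 1 = card E1"
      proof -
        have "card E1 > 0" using finE(1) f(1) card_gt_0_iff by blast
        thus ?thesis using finE(1) f(1) by (simp add: card_Diff_singleton)
      qed
      ultimately show ?thesis by simp
    qed
    moreover have "card (S \<inter> E2) + card (T \<inter> E2) + 1 = card E2"
    proof -
      have "(S \<inter> E2) \<union> (T \<inter> E2) = E2 - {d2}" using a(4) f by blast
      moreover have "card ((S \<inter> E2) \<union> (T \<inter> E2)) = card (S \<inter> E2) + card (T \<inter> E2)"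
        by (rule card_Un_disjoint) (use finS a(3) in auto)
      moreover have "card (E2 - {d2}) + 1 = card E2"
      proof -
        have "card E2 > 0" using finE(2) f(2) card_gt_0_iff by blast
        thus ?thesis using finE(2) f(2) by (simp add: card_Diff_singleton)
      qed
      ultimately show ?thesis by simp
    qed
    moreover note bS1 = side(1)[OF sum m a(1)] and bT1 = side(1)[OF sum m a(2)]
    moreover note bS2 = side(1)[OF sum_swap[OF sum] m(1,3,2) a(1)] and bT2 = side(1)[OF sum_swap[OF sum] m(1,3,2) a(2)]
    ultimately have cases: "(card (S \<inter> E1) + 1 = card V1 \<and> card (T \<inter> E1) + 2 = card V1 \<and>
        card (S \<inter> E2) + 2 = card V2 \<and> card (T \<inter> E2) + 1 = card V2) \<or>
      (card (T \<inter> E1) + 1 = card V1 \<and> card (S \<inter> E1) + 2 = card V1 \<and>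
        card (T \<inter> E2) + 2 = card V2 \<and> card (S \<inter> E2) + 1 = card V2)"
      using cS cT cE1 cE2 cV by linarith
    thus "st \<in> psi ` ?A"
    proof (elim disjE conjE)
      assume c: "card (S \<inter> E1) + 1 = card V1" "card (T \<inter> E1) + 2 = card V1"
        "card (S \<inter> E2) + 2 = card V2" "card (T \<inter> E2) + 1 = card V2"
      note oc = onto_case[OF sum m stm c]
      have "psi ((S \<inter> E1, T \<inter> E1 \<union> {d1}), (S \<inter> E2 \<union> {d2}, T \<inter> E2)) = (S,T)"
        unfolding psi_def using oc(2,3) by (simp add: Un_assoc)
      thus ?thesis using oc(1) st by (metis image_eqI)
    next
      assume c: "card (T \<inter> E1) + 1 = card V1" "card (S \<inter> E1) + 2 = card V1"
        "card (T \<inter> E2) + 2 = card V2" "card (S \<inter> E2) + 1 = card V2"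
      note oc = onto_case[OF sum m tp_swap[OF stm] c]
      have mem: "((S \<inter> E1 \<union> {d1}, T \<inter> E1), (S \<inter> E2, T \<inter> E2 \<union> {d2})) \<in> ?A"
        using oc(1) unfolding ve_mem by (auto intro: tp_swap)
      have "psi ((S \<inter> E1 \<union> {d1}, T \<inter> E1), (S \<inter> E2, T \<inter> E2 \<union> {d2})) = (S,T)"
        unfolding psi_def using oc(2,3) by (simp add: Un_assoc)
      thus ?thesis using mem st by (metis image_eqI)
    qed
  qed
  have bij: "bij_betw psi ?A ?B" unfolding bij_betw_def using inj into onto by blast
  show ?thesis using bij_betw_inv_into[OF bij] by blast
qed

end
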